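(* Let $I=(N,O,\succsim)$ be a general instance, $p$ a generalized random matching and $p'$ its associated random matching for the associated instance $I'$. Then $p$ is ex-post weakly stable if and only if $p'$ is ex-post weakly stable and $p$ is non-wasteful (i.e., $p'$ respects non-wastefulness).
   Context: General instance: $N=\{1,\dots,n\}$ agents, $O=\{o_1,\dots,o_m\}$ objects ($m,n\ge1$ arbitrary), $\emptyset$ the null object; each agent $i$ has a weak order $\succsim_i$ over $O\cup\{\emptyset\}$, each object $o$ a weak order $\succsim_o$ over $N\cup\{\emptyset\}$, with either $o\succ_i\emptyset$ or $\emptyset\succ_i o$, and either $i\succ_o\emptyset$ or $\emptyset\succ_o i$. $(i,o)$ is acceptable if $o\succ_i\emptyset$ and $i\succ_o\emptyset$. A generalized random matching is an $n\times m$ nonnegative matrix with row and column sums $\le1$; deterministic if entries are in $\{0,1\}$. $p$ is individually rational if $p(i,o)=0$ whenever $\emptyset\succ_i o$ or $\emptyset\succ_o i$; non-wasteful if there is no acceptable $(i,o)$ with $\sum_{o':o'\succsim_i o}p(i,o')<1$ and $\sum_j p(j,o)<1$. A generalized deterministic matching is weakly stable if it is individually rational and there is no acceptable $(i,o)$ with $\sum_{o':o'\succsim_i o}p(i,o')=0$ and $\sum_{j:j\succsim_o i}p(j,o)=0$. A generalized random matching $p$ is ex-post weakly stable if it is non-wasteful and can be written as $\sum_{j}\lambda_jP_j$ ($\lambda_j\in(0,1]$, $\sum\lambda_j=1$) with every $P_j$ a weakly stable generalized deterministic matching. Associated instance: $D=\{d_1,\dots,d_m\}$, $\Phi=\{\phi_1,\dots,\phi_n\}$,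 $N'=N\cup D$, $O'=O\cup\Phi$, with weak orders (blocks best to worst, consecutive blocks strict): $i\in N$: objects acceptable to $i$ by $\succsim_i$, $\phi_i$, $\phi_k$ ($k\ne i$) in increasing index, objects unacceptable to $i$ by $\succsim_i$; $o_j$: agents acceptable to $o_j$ by $\succsim_{o_j}$, $d_j$, $d_k$ ($k\ne j$) in increasing index, agents unacceptable to $o_j$ by $\succsim_{o_j}$; $d_j$: $o_j$, other objects of $O$ in increasing index, then null objects with $\phi_k\succsim'_{d_j}\phi_l$ iff $k\succsim_{o_j}l$; $\phi_i$: $i$, other agents of $N$ in increasing index, then dummies with $d_k\succsim'_{\phi_i}d_l$ iff $o_k\succsim_i o_l$. Associated random matching: $p'(i,o_j)=p(i,o_j)$, $p'(d_j,\phi_i)=p(i,o_j)$, $p'(i,\phi_i)=1-\sum_o p(i,o)$, $p'(d_j,o_j)=1-\sum_i p(i,o_j)$, other entries $0$ (an $(n+m)\times(n+m)$ bistochastic matrix). For $I'$: a deterministic matching $q$ (bistochastic $\{0,1\}$-matrix) is weakly stable if there are no $a,b\in N'$, $c,c'\in O'$ with $q(a,c')=1$, $q(b,c)=1$, $c\succ'_a c'$, $a\succ'_c b$; a random matching (bistochastic matrix) is ex-post weakly stable if it is a convex combination with positive weights of weakly stable deterministic matchings. *)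

theory Defs
  imports Complex_Main
begin

text \<open>
Agents are the natural numbers 1..n, objects o_1..o_m are the natural numbers 1..m.
The null object / "unmatched" option is None.
Pa i x y  means  x \<succsim>_i y  (x, y :: nat option, None = null object).
Po j x y  means  x \<succsim>_{o_j} y  (x, y :: nat option, None = null).
A (generalized random) matching is p :: nat \<Rightarrow> nat \<Rightarrow> real, p i j = p(i, o_j),
only its entries with 1 \<le> i \<le> n, 1 \<le> j \<le> m are relevant.

Associated instance: N' = Inl ` {1..n} (agents) \<union> Inr ` {1..m} (dummies d_j),
O' = Inl ` {1..m} (objects o_j) \<union> Inr ` {1..n} (null objects phi_i).
\<close>

definition weak_order_on :: "'a set \<Rightarrow> ('a \<Rightarrow> 'a \<Rightarrow> bool) \<Rightarrow> bool" where
  "weak_order_on A R \<longleftrightarrow>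
     (\<forall>x\<in>A. \<forall>y\<in>A. R x y \<or> R y x) \<and>
     (\<forall>x\<in>A. \<forall>y\<in>A. \<forall>z\<in>A. R x y \<longrightarrow> R y z \<longrightarrow> R x z)"

definition strict :: "('a \<Rightarrow> 'a \<Rightarrow> bool) \<Rightarrow> 'a \<Rightarrow> 'a \<Rightarrow> bool" where
  "strict R x y \<longleftrightarrow> R x y \<and> \<not> R y x"

definition general_instance ::
  "nat \<Rightarrow> nat \<Rightarrow> (nat \<Rightarrow> nat option \<Rightarrow> nat option \<Rightarrow> bool)
       \<Rightarrow> (nat \<Rightarrow> nat option \<Rightarrow> nat option \<Rightarrow> bool) \<Rightarrow> bool" where
  "general_instance n m Pa Po \<longleftrightarrow> n \<ge> 1 \<and> m \<ge> 1 \<and>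
     (\<forall>i\<in>{1..n}. weak_order_on (insert None (Some ` {1..m})) (Pa i) \<and>
        (\<forall>ob\<in>{1..m}. strict (Pa i) (Some ob) None \<or> strict (Pa i) None (Some ob))) \<and>
     (\<forall>j\<in>{1..m}. weak_order_on (insert None (Some ` {1..n})) (Po j) \<and>
        (\<forall>i\<in>{1..n}. strict (Po j) (Some i) None \<or> strict (Po j) None (Some i)))"

definition acceptable ::
  "(nat \<Rightarrow> nat option \<Rightarrow> nat option \<Rightarrow> bool)
       \<Rightarrow> (nat \<Rightarrow> nat option \<Rightarrow> nat option \<Rightarrow> bool) \<Rightarrow> nat \<Rightarrow> nat \<Rightarrow> bool" where
  "acceptable Pa Po i ob \<longleftrightarrow> strict (Pa i) (Some ob) None \<and> strict (Po ob) (Some i) None"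

definition gen_random_matching :: "nat \<Rightarrow> nat \<Rightarrow> (nat \<Rightarrow> nat \<Rightarrow> real) \<Rightarrow> bool" where
  "gen_random_matching n m p \<longleftrightarrow>
     (\<forall>i\<in>{1..n}. \<forall>ob\<in>{1..m}. p i ob \<ge> 0) \<and>
     (\<forall>i\<in>{1..n}. (\<Sum>ob\<in>{1..m}. p i ob) \<le> 1) \<and>
     (\<forall>ob\<in>{1..m}. (\<Sum>i\<in>{1..n}. p i ob) \<le> 1)"

definition gen_det_matching :: "nat \<Rightarrow> nat \<Rightarrow> (nat \<Rightarrow> nat \<Rightarrow> real) \<Rightarrow> bool" where
  "gen_det_matching n m P \<longleftrightarrow> gen_random_matching n m P \<and>
     (\<forall>i\<in>{1..n}. \<forall>ob\<in>{1..m}. P i ob = 0 \<or> P i ob = 1)"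

definition indiv_rational ::
  "nat \<Rightarrow> nat \<Rightarrow> (nat \<Rightarrow> nat option \<Rightarrow> nat option \<Rightarrow> bool)
       \<Rightarrow> (nat \<Rightarrow> nat option \<Rightarrow> nat option \<Rightarrow> bool) \<Rightarrow> (nat \<Rightarrow> nat \<Rightarrow> real) \<Rightarrow> bool" where
  "indiv_rational n m Pa Po p \<longleftrightarrow>
     (\<forall>i\<in>{1..n}. \<forall>ob\<in>{1..m}.
        (strict (Pa i) None (Some ob) \<or> strict (Po ob) None (Some i)) \<longrightarrow> p i ob = 0)"

definition non_wasteful ::
  "nat \<Rightarrow> nat \<Rightarrow> (nat \<Rightarrow> nat option \<Rightarrow> nat option \<Rightarrow> bool)
       \<Rightarrow> (nat \<Rightarrow> nat option \<Rightarrow> nat option \<Rightarrow> bool) \<Rightarrow> (nat \<Rightarrow> nat \<Rightarrow> real) \<Rightarrow> bool" where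
  "non_wasteful n m Pa Po p \<longleftrightarrow>
     \<not> (\<exists>i\<in>{1..n}. \<exists>ob\<in>{1..m}. acceptable Pa Po i ob \<and>
          (\<Sum>ob'\<in>{ob'\<in>{1..m}. Pa i (Some ob') (Some ob)}. p i ob') < 1 \<and>
          (\<Sum>j\<in>{1..n}. p j ob) < 1)"

definition gen_weakly_stable ::
  "nat \<Rightarrow> nat \<Rightarrow> (nat \<Rightarrow> nat option \<Rightarrow> nat option \<Rightarrow> bool)
       \<Rightarrow> (nat \<Rightarrow> nat option \<Rightarrow> nat option \<Rightarrow> bool) \<Rightarrow> (nat \<Rightarrow> nat \<Rightarrow> real) \<Rightarrow> bool" where
  "gen_weakly_stable n m Pa Po P \<longleftrightarrow> gen_det_matching n m P \<and>
     indiv_rational n m Pa Po P \<and>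
     \<not> (\<exists>i\<in>{1..n}. \<exists>ob\<in>{1..m}. acceptable Pa Po i ob \<and>
          (\<Sum>ob'\<in>{ob'\<in>{1..m}. Pa i (Some ob') (Some ob)}. P i ob') = 0 \<and>
          (\<Sum>j\<in>{j\<in>{1..n}. Po ob (Some j) (Some i)}. P j ob) = 0)"

definition gen_ex_post_weakly_stable ::
  "nat \<Rightarrow> nat \<Rightarrow> (nat \<Rightarrow> nat option \<Rightarrow> nat option \<Rightarrow> bool)
       \<Rightarrow> (nat \<Rightarrow> nat option \<Rightarrow> nat option \<Rightarrow> bool) \<Rightarrow> (nat \<Rightarrow> nat \<Rightarrow> real) \<Rightarrow> bool" where
  "gen_ex_post_weakly_stable n m Pa Po p \<longleftrightarrow> non_wasteful n m Pa Po p \<and>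
     (\<exists>(K::nat) (lam::nat \<Rightarrow> real) (Ps::nat \<Rightarrow> nat \<Rightarrow> nat \<Rightarrow> real).
        (\<forall>k<K. 0 < lam k \<and> lam k \<le> 1 \<and> gen_weakly_stable n m Pa Po (Ps k)) \<and>
        (\<Sum>k<K. lam k) = 1 \<and>
        (\<forall>i\<in>{1..n}. \<forall>ob\<in>{1..m}. p i ob = (\<Sum>k<K. lam k * Ps k i ob)))"

definition agents' :: "nat \<Rightarrow> nat \<Rightarrow> (nat + nat) set" where
  "agents' n m = Inl ` {1..n} \<union> Inr ` {1..m}"

definition objects' :: "nat \<Rightarrow> nat \<Rightarrow> (nat + nat) set" where
  "objects' n m = Inl ` {1..m} \<union> Inr ` {1..n}"

definition first_rank :: "nat \<Rightarrow> nat \<Rightarrow> nat" where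
  "first_rank a k = (if k = a then 0 else k)"

text \<open>Weak preference of an agent of N' over O': assoc_apref Pa Po a c c' means c \<succsim>'_a c'.\<close>
definition assoc_apref ::
  "(nat \<Rightarrow> nat option \<Rightarrow> nat option \<Rightarrow> bool) \<Rightarrow> (nat \<Rightarrow> nat option \<Rightarrow> nat option \<Rightarrow> bool)
     \<Rightarrow> nat + nat \<Rightarrow> nat + nat \<Rightarrow> nat + nat \<Rightarrow> bool" where
  "assoc_apref Pa Po a c c' =
     (case a of
        Inl i \<Rightarrow>
          (let acc = (\<lambda>ob. strict (Pa i) (Some ob) None) in
           case (c, c') of
             (Inl ob, Inl ob') \<Rightarrow> (if acc ob = acc ob' then Pa i (Some ob) (Some ob') else acc ob)
           | (Inl ob, Inr k) \<Rightarrow> acc ob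
           | (Inr k, Inl ob) \<Rightarrow> \<not> acc ob
           | (Inr k, Inr l) \<Rightarrow> first_rank i k \<le> first_rank i l)
      | Inr j \<Rightarrow>
          (case (c, c') of
             (Inl ob, Inl ob') \<Rightarrow> first_rank j ob \<le> first_rank j ob'
           | (Inl ob, Inr k) \<Rightarrow> True
           | (Inr k, Inl ob) \<Rightarrow> False
           | (Inr k, Inr l) \<Rightarrow> Po j (Some k) (Some l)))"

text \<open>Weak preference of an object of O' over N': assoc_opref Pa Po c a b means a \<succsim>'_c b.\<close>
definition assoc_opref ::
  "(nat \<Rightarrow> nat option \<Rightarrow> nat option \<Rightarrow> bool) \<Rightarrow> (nat \<Rightarrow> nat option \<Rightarrow> nat option \<Rightarrow> bool)
     \<Rightarrow> nat + nat \<Rightarrow> nat + nat \<Rightarrow> nat + nat \<Rightarrow> bool" where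
  "assoc_opref Pa Po c a b =
     (case c of
        Inl j \<Rightarrow>
          (let acc = (\<lambda>i. strict (Po j) (Some i) None) in
           case (a, b) of
             (Inl i, Inl i') \<Rightarrow> (if acc i = acc i' then Po j (Some i) (Some i') else acc i)
           | (Inl i, Inr k) \<Rightarrow> acc i
           | (Inr k, Inl i) \<Rightarrow> \<not> acc i
           | (Inr k, Inr l) \<Rightarrow> first_rank j k \<le> first_rank j l)
      | Inr i \<Rightarrow>
          (case (a, b) of
             (Inl x, Inl y) \<Rightarrow> first_rank i x \<le> first_rank i y
           | (Inl x, Inr k) \<Rightarrow> True
           | (Inr k, Inl x) \<Rightarrow> False
           | (Inr k, Inr l) \<Rightarrow> Pa i (Some k) (Some l)))"

definition assoc_matching ::
  "nat \<Rightarrow> nat \<Rightarrow> (nat \<Rightarrow> nat \<Rightarrow> real) \<Rightarrow> nat + nat \<Rightarrow> nat + nat \<Rightarrow> real" where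
  "assoc_matching n m p a c =
     (case (a, c) of
        (Inl i, Inl ob) \<Rightarrow> p i ob
      | (Inr j, Inr i) \<Rightarrow> p i j
      | (Inl i, Inr k) \<Rightarrow> (if k = i then 1 - (\<Sum>ob\<in>{1..m}. p i ob) else 0)
      | (Inr j, Inl ob) \<Rightarrow> (if ob = j then 1 - (\<Sum>i\<in>{1..n}. p i j) else 0))"

definition bistochastic' :: "nat \<Rightarrow> nat \<Rightarrow> (nat + nat \<Rightarrow> nat + nat \<Rightarrow> real) \<Rightarrow> bool" where
  "bistochastic' n m q \<longleftrightarrow>
     (\<forall>a\<in>agents' n m. \<forall>c\<in>objects' n m. q a c \<ge> 0) \<and>
     (\<forall>a\<in>agents' n m. (\<Sum>c\<in>objects' n m. q a c) = 1) \<and>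
     (\<forall>c\<in>objects' n m. (\<Sum>a\<in>agents' n m. q a c) = 1)"

definition det_matching' :: "nat \<Rightarrow> nat \<Rightarrow> (nat + nat \<Rightarrow> nat + nat \<Rightarrow> real) \<Rightarrow> bool" where
  "det_matching' n m q \<longleftrightarrow> bistochastic' n m q \<and>
     (\<forall>a\<in>agents' n m. \<forall>c\<in>objects' n m. q a c = 0 \<or> q a c = 1)"

definition weakly_stable' ::
  "nat \<Rightarrow> nat \<Rightarrow> (nat \<Rightarrow> nat option \<Rightarrow> nat option \<Rightarrow> bool)
     \<Rightarrow> (nat \<Rightarrow> nat option \<Rightarrow> nat option \<Rightarrow> bool) \<Rightarrow> (nat + nat \<Rightarrow> nat + nat \<Rightarrow> real) \<Rightarrow> bool" where
  "weakly_stable' n m Pa Po q \<longleftrightarrow> det_matching' n m q \<and>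
     \<not> (\<exists>a\<in>agents' n m. \<exists>b\<in>agents' n m. \<exists>c\<in>objects' n m. \<exists>c'\<in>objects' n m.
          q a c' = 1 \<and> q b c = 1 \<and>
          strict (assoc_apref Pa Po a) c c' \<and> strict (assoc_opref Pa Po c) a b)"

definition ex_post_weakly_stable' ::
  "nat \<Rightarrow> nat \<Rightarrow> (nat \<Rightarrow> nat option \<Rightarrow> nat option \<Rightarrow> bool)
     \<Rightarrow> (nat \<Rightarrow> nat option \<Rightarrow> nat option \<Rightarrow> bool) \<Rightarrow> (nat + nat \<Rightarrow> nat + nat \<Rightarrow> real) \<Rightarrow> bool" where
  "ex_post_weakly_stable' n m Pa Po q \<longleftrightarrow> bistochastic' n m q \<and>
     (\<exists>(K::nat) (lam::nat \<Rightarrow> real) (Qs::nat \<Rightarrow> nat + nat \<Rightarrow> nat + nat \<Rightarrow> real).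
        (\<forall>k<K. 0 < lam k \<and> weakly_stable' n m Pa Po (Qs k)) \<and>
        (\<Sum>k<K. lam k) = 1 \<and>
        (\<forall>a\<in>agents' n m. \<forall>c\<in>objects' n m. q a c = (\<Sum>k<K. lam k * Qs k a c)))"

end

theory Submission
  imports Defs
begin


lemma agents'_cases:
  assumes "a \<in> agents' n m"
  obtains (L) i where "a = Inl i" "i \<in> {1..n}" | (R) j where "a = Inr j" "j \<in> {1..m}"
  using assms unfolding agents'_def by blast

lemma objects'_cases:
  assumes "c \<in> objects' n m"
  obtains (L) ob where "c = Inl ob" "ob \<in> {1..m}" | (R) k where "c = Inr k" "k \<in> {1..n}"
  using assms unfolding objects'_def by blast

lemma sum_objects':
  "sum f (objects' n m) = (\<Sum>ob\<in>{1..m}. f (Inl ob)) + (\<Sum>k\<in>{1..n}. f (Inr k))"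
  unfolding objects'_def by (subst sum.union_disjoint) (auto simp: sum.reindex)

lemma sum_agents':
  "sum f (agents' n m) = (\<Sum>i\<in>{1..n}. f (Inl i)) + (\<Sum>j\<in>{1..m}. f (Inr j))"
  unfolding agents'_def by (subst sum.union_disjoint) (auto simp: sum.reindex)

lemma sum01_unique:
  fixes f :: "'a \<Rightarrow> real"
  assumes "finite A" "\<forall>x\<in>A. f x \<ge> 0" "sum f A \<le> 1" "x\<in>A" "f x = 1" "y\<in>A" "y\<noteq>x"
  shows "f y = 0"
proof -
  have "sum f A = f x + sum f (A - {x})" using assms by (simp add: sum.remove)
  moreover have "f y \<le> sum f (A - {x})"
    by (rule member_le_sum) (use assms in auto)
  ultimately show ?thesis using assms by force
qed

lemma sum01_exists:
  fixes f :: "'a \<Rightarrow> real"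
  assumes "finite A" "\<forall>x\<in>A. f x = 0 \<or> f x = 1" "sum f A = 1"
  shows "\<exists>x\<in>A. f x = 1"
proof (rule ccontr)
  assume "\<not> ?thesis"
  then have "sum f A = 0" using assms by (intro sum.neutral) auto
  then show False using assms by simp
qed

lemma sum_nonneg_zeroD:
  fixes f :: "'a \<Rightarrow> real"
  assumes "finite A" "\<forall>x\<in>A. f x \<ge> 0" "sum f A = 0" "x\<in>A"
  shows "f x = 0"
  using assms sum_nonneg_eq_0_iff by blast

lemma wo_total: "weak_order_on A R \<Longrightarrow> x\<in>A \<Longrightarrow> y\<in>A \<Longrightarrow> R x y \<or> R y x"
  unfolding weak_order_on_def by blast
lemma wo_trans: "weak_order_on A R \<Longrightarrow> x\<in>A \<Longrightarrow> y\<in>A \<Longrightarrow> z\<in>A \<Longrightarrow> R x y \<Longrightarrow> R y z \<Longrightarrow> R x z"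
  unfolding weak_order_on_def by blast

lemma gi_wa: "general_instance n m Pa Po \<Longrightarrow> i\<in>{1..n} \<Longrightarrow> weak_order_on (insert None (Some ` {1..m})) (Pa i)"
  unfolding general_instance_def by blast
lemma gi_wo: "general_instance n m Pa Po \<Longrightarrow> j\<in>{1..m} \<Longrightarrow> weak_order_on (insert None (Some ` {1..n})) (Po j)"
  unfolding general_instance_def by blast
lemma gi_da: "general_instance n m Pa Po \<Longrightarrow> i\<in>{1..n} \<Longrightarrow> ob\<in>{1..m} \<Longrightarrow>
   strict (Pa i) (Some ob) None \<or> strict (Pa i) None (Some ob)"
  unfolding general_instance_def by blast
lemma gi_do: "general_instance n m Pa Po \<Longrightarrow> j\<in>{1..m} \<Longrightarrow> i\<in>{1..n} \<Longrightarrow>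
   strict (Po j) (Some i) None \<or> strict (Po j) None (Some i)"
  unfolding general_instance_def by blast

lemma apref_simps:
 "assoc_apref Pa Po (Inl i) (Inl ob) (Inl ob') = (if strict (Pa i) (Some ob) None = strict (Pa i) (Some ob') None then Pa i (Some ob) (Some ob') else strict (Pa i) (Some ob) None)"
 "assoc_apref Pa Po (Inl i) (Inl ob) (Inr k) = strict (Pa i) (Some ob) None"
 "assoc_apref Pa Po (Inl i) (Inr k) (Inl ob) = (\<not> strict (Pa i) (Some ob) None)"
 "assoc_apref Pa Po (Inl i) (Inr k) (Inr l) = (first_rank i k \<le> first_rank i l)"
 "assoc_apref Pa Po (Inr j) (Inl ob) (Inl ob') = (first_rank j ob \<le> first_rank j ob')"
 "assoc_apref Pa Po (Inr j) (Inl ob) (Inr k) = True"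
 "assoc_apref Pa Po (Inr j) (Inr k) (Inl ob) = False"
 "assoc_apref Pa Po (Inr j) (Inr k) (Inr l) = Po j (Some k) (Some l)"
  by (simp_all add: assoc_apref_def)

lemma opref_simps:
 "assoc_opref Pa Po (Inl j) (Inl i) (Inl i') = (if strict (Po j) (Some i) None = strict (Po j) (Some i') None then Po j (Some i) (Some i') else strict (Po j) (Some i) None)"
 "assoc_opref Pa Po (Inl j) (Inl i) (Inr k) = strict (Po j) (Some i) None"
 "assoc_opref Pa Po (Inl j) (Inr k) (Inl i) = (\<not> strict (Po j) (Some i) None)"
 "assoc_opref Pa Po (Inl j) (Inr k) (Inr l) = (first_rank j k \<le> first_rank j l)"
 "assoc_opref Pa Po (Inr i) (Inl x) (Inl y) = (first_rank i x \<le> first_rank i y)"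
 "assoc_opref Pa Po (Inr i) (Inl x) (Inr k) = True"
 "assoc_opref Pa Po (Inr i) (Inr k) (Inl x) = False"
 "assoc_opref Pa Po (Inr i) (Inr k) (Inr l) = Pa i (Some k) (Some l)"
  by (simp_all add: assoc_opref_def)

lemma assoc_simps:
  "assoc_matching n m p (Inl i) (Inl ob) = p i ob"
  "assoc_matching n m p (Inr j) (Inr i) = p i j"
  "assoc_matching n m p (Inl i) (Inr k) = (if k = i then 1 - (\<Sum>ob\<in>{1..m}. p i ob) else 0)"
  "assoc_matching n m p (Inr j) (Inl ob) = (if ob = j then 1 - (\<Sum>i\<in>{1..n}. p i j) else 0)"
  by (simp_all add: assoc_matching_def)

lemma first_rank_self[simp]: "first_rank a a = 0" by (simp add: first_rank_def)
lemma first_rank_other[simp]: "k \<noteq> a \<Longrightarrow> first_rank a k = k" by (simp add: first_rank_def)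

lemma assoc_bist:
  assumes "gen_random_matching n m p"
  shows "bistochastic' n m (assoc_matching n m p)"
  using assms unfolding bistochastic'_def gen_random_matching_def
  by (auto simp: sum_objects' sum_agents' assoc_simps elim!: agents'_cases objects'_cases)

lemma lin_aux:
  fixes g :: "'a::{ord} \<Rightarrow> 'b \<Rightarrow> real"
  assumes "(\<Sum>k<K. lam k) = 1"
  shows "(\<Sum>k<K. lam k * (1 - (\<Sum>x\<in>B. g k x))) = 1 - (\<Sum>x\<in>B. \<Sum>k<K. lam k * g k x)"
  by (simp add: right_diff_distrib sum_subtractf sum_distrib_left assms sum.swap[of _ B])

lemma assoc_lin:
  assumes "(\<Sum>k<K. lam k) = 1" "\<forall>i\<in>{1..n}. \<forall>ob\<in>{1..m}. p i ob = (\<Sum>k<K. lam k * Ps k i ob)"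
    "a \<in> agents' n m" "c \<in> objects' n m"
  shows "assoc_matching n m p a c = (\<Sum>k<K. lam k * assoc_matching n m (Ps k) a c)"
using assms(3) proof (cases rule: agents'_cases)
  case (L i)
  show ?thesis using assms(4) proof (cases rule: objects'_cases)
    case (L ob)
    then show ?thesis using \<open>a = Inl i\<close> \<open>i \<in> _\<close> assms(2) by (simp add: assoc_simps)
  next
    case (R k)
    show ?thesis
    proof (cases "k = i")
      case True
      have "(\<Sum>ob\<in>{1..m}. p i ob) = (\<Sum>ob\<in>{1..m}. \<Sum>k<K. lam k * Ps k i ob)"
        using assms(2) \<open>i \<in> _\<close> by (intro sum.cong) auto
      then show ?thesis using True R L lin_aux[OF assms(1), of "\<lambda>k ob. Ps k i ob" "{1..m}"]
        by (simp add: assoc_simps)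
    qed (use R L in \<open>simp add: assoc_simps\<close>)
  qed
next
  case (R j)
  show ?thesis using assms(4) proof (cases rule: objects'_cases)
    case (R i)
    then show ?thesis using \<open>a = Inr j\<close> \<open>j \<in> _\<close> assms(2) by (simp add: assoc_simps)
  next
    case (L ob)
    show ?thesis
    proof (cases "ob = j")
      case True
      have "(\<Sum>i\<in>{1..n}. p i j) = (\<Sum>i\<in>{1..n}. \<Sum>k<K. lam k * Ps k i j)"
        using assms(2) \<open>j \<in> _\<close> by (intro sum.cong) auto
      then show ?thesis using True R L lin_aux[OF assms(1), of "\<lambda>k i. Ps k i j" "{1..n}"]
        by (simp add: assoc_simps)
    qed (use R L in \<open>simp add: assoc_simps\<close>)
  qed
qed



lemma assoc_ws:
  assumes gi: "general_instance n m Pa Po" and ws: "gen_weakly_stable n m Pa Po P"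
  shows "weakly_stable' n m Pa Po (assoc_matching n m P)"
proof -
  let ?N = "{1..n::nat}" and ?M = "{1..m::nat}"
  let ?q = "assoc_matching n m P"
  have det: "gen_det_matching n m P" and ir: "indiv_rational n m Pa Po P"
    and nb: "\<not> (\<exists>i\<in>?N. \<exists>ob\<in>?M. acceptable Pa Po i ob \<and>
          (\<Sum>ob'\<in>{ob'\<in>?M. Pa i (Some ob') (Some ob)}. P i ob') = 0 \<and>
          (\<Sum>j\<in>{j\<in>?N. Po ob (Some j) (Some i)}. P j ob) = 0)"
    using ws unfolding gen_weakly_stable_def by auto
  have rm: "gen_random_matching n m P" using det unfolding gen_det_matching_def by auto
  have nn: "\<And>i ob. i\<in>?N \<Longrightarrow> ob\<in>?M \<Longrightarrow> P i ob \<ge> 0"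
    using rm unfolding gen_random_matching_def by auto
  have z1: "\<And>i ob. i\<in>?N \<Longrightarrow> ob\<in>?M \<Longrightarrow> P i ob = 0 \<or> P i ob = 1"
    using det unfolding gen_det_matching_def by auto
  have rs: "\<And>i. i\<in>?N \<Longrightarrow> (\<Sum>ob\<in>?M. P i ob) \<le> 1" and cs: "\<And>ob. ob\<in>?M \<Longrightarrow> (\<Sum>i\<in>?N. P i ob) \<le> 1"
    using rm unfolding gen_random_matching_def by auto
  have rowu: "\<And>i ob ob'. i\<in>?N \<Longrightarrow> ob\<in>?M \<Longrightarrow> ob'\<in>?M \<Longrightarrow> P i ob = 1 \<Longrightarrow> ob' \<noteq> ob \<Longrightarrow> P i ob' = 0"
    subgoal for i ob ob' using sum01_unique[of ?M "P i" ob ob'] nn rs by auto done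
  have colu: "\<And>i j ob. i\<in>?N \<Longrightarrow> j\<in>?N \<Longrightarrow> ob\<in>?M \<Longrightarrow> P i ob = 1 \<Longrightarrow> j \<noteq> i \<Longrightarrow> P j ob = 0"
    subgoal for i j ob using sum01_unique[of ?N "\<lambda>i. P i ob" i j] nn cs by auto done
  have irr: "\<And>i ob. i\<in>?N \<Longrightarrow> ob\<in>?M \<Longrightarrow> P i ob = 1 \<Longrightarrow>
      strict (Pa i) (Some ob) None \<and> strict (Po ob) (Some i) None"
    subgoal for i ob using ir gi_da[OF gi, of i ob] gi_do[OF gi, of ob i]
      unfolding indiv_rational_def by force done
  have nb': False if "i\<in>?N" "ob\<in>?M" "acceptable Pa Po i ob"
    "\<And>ob'. ob'\<in>?M \<Longrightarrow> P i ob' = 1 \<Longrightarrow> \<not> Pa i (Some ob') (Some ob)"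
    "\<And>j. j\<in>?N \<Longrightarrow> P j ob = 1 \<Longrightarrow> \<not> Po ob (Some j) (Some i)" for i ob
  proof -
    have "(\<Sum>ob'\<in>{ob'\<in>?M. Pa i (Some ob') (Some ob)}. P i ob') = 0"
      using that z1 by (intro sum.neutral) force
    moreover have "(\<Sum>j\<in>{j\<in>?N. Po ob (Some j) (Some i)}. P j ob) = 0"
      using that z1 by (intro sum.neutral) force
    ultimately show False using nb that by blast
  qed
  have qLR: "k = i \<and> (\<forall>ob\<in>?M. P i ob = 0)" if "i\<in>?N" "?q (Inl i) (Inr k) = 1" for i k
  proof -
    have "k = i" using that by (simp add: assoc_simps split: if_splits)
    moreover have "(\<Sum>ob\<in>?M. P i ob) = 0" using that by (simp add: assoc_simps split: if_splits)
    ultimately show ?thesis using sum_nonneg_zeroD[of ?M "P i"] nn that by auto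
  qed
  have qRL: "ob = j \<and> (\<forall>i\<in>?N. P i j = 0)" if "j\<in>?M" "?q (Inr j) (Inl ob) = 1" for j ob
  proof -
    have "ob = j" using that by (simp add: assoc_simps split: if_splits)
    moreover have "(\<Sum>i\<in>?N. P i j) = 0" using that by (simp add: assoc_simps split: if_splits)
    ultimately show ?thesis using sum_nonneg_zeroD[of ?N "\<lambda>i. P i j"] nn that by auto
  qed
  have sum01: "(\<Sum>ob\<in>?M. P i ob) = 0 \<or> (\<Sum>ob\<in>?M. P i ob) = 1" if "i \<in> ?N" for i
  proof (cases "\<exists>ob\<in>?M. P i ob = 1")
    case True
    then obtain ob where ob: "ob\<in>?M" "P i ob = 1" by auto
    have "(\<Sum>ob'\<in>?M. P i ob') = (\<Sum>ob'\<in>?M. if ob' = ob then 1 else 0)"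
      using rowu[OF that ob(1)] ob by (intro sum.cong) auto
    then show ?thesis using ob by simp
  next
    case False
    then have "(\<Sum>ob\<in>?M. P i ob) = 0" using z1 that by (intro sum.neutral) force
    then show ?thesis by simp
  qed
  have sum01c: "(\<Sum>i\<in>?N. P i ob) = 0 \<or> (\<Sum>i\<in>?N. P i ob) = 1" if "ob \<in> ?M" for ob
  proof (cases "\<exists>i\<in>?N. P i ob = 1")
    case True
    then obtain i where i: "i\<in>?N" "P i ob = 1" by auto
    have "(\<Sum>j\<in>?N. P j ob) = (\<Sum>j\<in>?N. if j = i then 1 else 0)"
      using colu[OF i(1) _ that] i by (intro sum.cong) auto
    then show ?thesis using i by simp
  next
    case False
    then have "(\<Sum>i\<in>?N. P i ob) = 0" using z1 that by (intro sum.neutral) force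
    then show ?thesis by simp
  qed
  have dm: "det_matching' n m ?q"
    unfolding det_matching'_def
  proof
    show "bistochastic' n m ?q" by (rule assoc_bist[OF rm])
    show "\<forall>a\<in>agents' n m. \<forall>c\<in>objects' n m. ?q a c = 0 \<or> ?q a c = 1"
    proof (intro ballI)
      fix a c assume a: "a \<in> agents' n m" and c: "c \<in> objects' n m"
      show "?q a c = 0 \<or> ?q a c = 1" using a
      proof (cases rule: agents'_cases)
        case (L i)
        show ?thesis using c
        proof (cases rule: objects'_cases)
          case (L ob) then show ?thesis using z1[of i ob] \<open>a = Inl i\<close> \<open>i \<in> ?N\<close> by (simp add: assoc_simps)
        next
          case (R k) then show ?thesis using sum01[of i] \<open>a = Inl i\<close> \<open>i \<in> ?N\<close> by (auto simp: assoc_simps)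
        qed
      next
        case (R j)
        show ?thesis using c
        proof (cases rule: objects'_cases)
          case (R i) then show ?thesis using z1[of i j] \<open>a = Inr j\<close> \<open>j \<in> ?M\<close> by (simp add: assoc_simps)
        next
          case (L ob) then show ?thesis using sum01c[of j] \<open>a = Inr j\<close> \<open>j \<in> ?M\<close> by (auto simp: assoc_simps)
        qed
      qed
    qed
  qed
  have noblk: False if a: "a \<in> agents' n m" and b: "b \<in> agents' n m"
    and c: "c \<in> objects' n m" and c': "c' \<in> objects' n m"
    and h1: "?q a c' = 1" and h2: "?q b c = 1"
    and h3: "strict (assoc_apref Pa Po a) c c'" and h4: "strict (assoc_opref Pa Po c) a b" for a b c c'
    using a
  proof (cases rule: agents'_cases)
    case (L i)
    show False using c
    proof (cases rule: objects'_cases)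
      case (R k)
      show False using c'
      proof (cases rule: objects'_cases)
        case (L ob')
        then have "P i ob' = 1" using h1 \<open>a = Inl i\<close> by (simp add: assoc_simps)
        then show False using irr[OF \<open>i\<in>?N\<close> \<open>ob'\<in>?M\<close>] h3 L R \<open>a = Inl i\<close>
          by (simp add: apref_simps strict_def)
      next
        case (R k')
        then have "k' = i" using qLR[of i k'] h1 \<open>a = Inl i\<close> \<open>i\<in>?N\<close> by simp
        then show False using h3 R \<open>c = Inr k\<close> \<open>a = Inl i\<close>
          by (simp add: apref_simps strict_def)
      qed
    next
      case (L ob)
      have H: "strict (Pa i) (Some ob) None \<and> (\<forall>ob'\<in>?M. P i ob' = 1 \<longrightarrow> \<not> Pa i (Some ob') (Some ob))"
        using c'
      proof (cases rule: objects'_cases)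
        case (L ob'')
        then have p1: "P i ob'' = 1" using h1 \<open>a = Inl i\<close> by (simp add: assoc_simps)
        then have acc: "strict (Pa i) (Some ob'') None" using irr \<open>i\<in>?N\<close> L by blast
        have "strict (Pa i) (Some ob) None \<and> \<not> Pa i (Some ob'') (Some ob)"
          using h3 L \<open>c = Inl ob\<close> \<open>a = Inl i\<close> acc
          by (simp add: apref_simps strict_def split: if_splits)
        moreover have "ob' = ob''" if "ob'\<in>?M" "P i ob' = 1" for ob'
          using rowu[OF \<open>i\<in>?N\<close> L(2) that(1) p1] that by auto
        ultimately show ?thesis by auto
      next
        case (R k)
        then have "\<forall>ob\<in>?M. P i ob = 0" using qLR[of i k] h1 \<open>a = Inl i\<close> \<open>i\<in>?N\<close> by simp
        then show ?thesis using h3 R \<open>c = Inl ob\<close> \<open>a = Inl i\<close>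
          by (simp add: apref_simps strict_def)
      qed
      have H2: "strict (Po ob) (Some i) None \<and> (\<forall>j\<in>?N. P j ob = 1 \<longrightarrow> \<not> Po ob (Some j) (Some i))"
        using b
      proof (cases rule: agents'_cases)
        case (L j)
        then have p1: "P j ob = 1" using h2 \<open>c = Inl ob\<close> by (simp add: assoc_simps)
        then have acc: "strict (Po ob) (Some j) None" using irr \<open>ob\<in>?M\<close> L by blast
        have "strict (Po ob) (Some i) None \<and> \<not> Po ob (Some j) (Some i)"
          using h4 L \<open>c = Inl ob\<close> \<open>a = Inl i\<close> acc
          by (simp add: opref_simps strict_def split: if_splits)
        moreover have "j' = j" if "j'\<in>?N" "P j' ob = 1" for j'
          using colu[OF L(2) that(1) \<open>ob\<in>?M\<close> p1] that by auto
        ultimately show ?thesis by auto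
      next
        case (R d)
        then have "\<forall>i\<in>?N. P i ob = 0" "d = ob" using qRL[of d ob] h2 \<open>c = Inl ob\<close> by auto
        then show ?thesis using h4 R \<open>c = Inl ob\<close> \<open>a = Inl i\<close>
          by (simp add: opref_simps strict_def)
      qed
      show False using nb'[of i ob] H H2 \<open>i\<in>?N\<close> \<open>ob\<in>?M\<close> unfolding acceptable_def by blast
    qed
  next
    case (R j)
    show False using c'
    proof (cases rule: objects'_cases)
      case (L ob'')
      then have "ob'' = j" using qRL[of j ob''] h1 \<open>a = Inr j\<close> \<open>j\<in>?M\<close> by simp
      then show False using h3 L \<open>a = Inr j\<close>
        by (cases c) (auto simp: apref_simps strict_def first_rank_def)
    next
      case (R i)
      then have pij: "P i j = 1" using h1 \<open>a = Inr j\<close> by (simp add: assoc_simps)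
      have accj: "strict (Po j) (Some i) None" using irr[OF R(2) \<open>j\<in>?M\<close> pij] by blast
      show False using c
      proof (cases rule: objects'_cases)
        case (L ob)
        show False using b
        proof (cases rule: agents'_cases)
          case (L i')
          then have "P i' ob = 1" using h2 \<open>c = Inl ob\<close> by (simp add: assoc_simps)
          then have "strict (Po ob) (Some i') None" using irr L \<open>ob\<in>?M\<close> by blast
          then show False using h4 L \<open>c = Inl ob\<close> \<open>a = Inr j\<close>
            by (simp add: opref_simps strict_def)
        next
          case (R d)
          then have "d = ob" using qRL[of d ob] h2 \<open>c = Inl ob\<close> by auto
          then show False using h4 R \<open>c = Inl ob\<close> \<open>a = Inr j\<close>
            by (auto simp: opref_simps strict_def first_rank_def)
        qed
      next
        case (R k)
        have pref: "Po j (Some k) (Some i)" "\<not> Po j (Some i) (Some k)"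
          using h3 R \<open>c' = Inr i\<close> \<open>a = Inr j\<close> by (auto simp: apref_simps strict_def)
        show False using b
        proof (cases rule: agents'_cases)
          case (L i'')
          then have "k = i''" using qLR[of i'' k] h2 \<open>c = Inr k\<close> by auto
          then show False using h4 L \<open>c = Inr k\<close> \<open>a = Inr j\<close>
            by (simp add: opref_simps strict_def)
        next
          case (R j')
          then have pkj: "P k j' = 1" using h2 \<open>c = Inr k\<close> by (simp add: assoc_simps)
          have kN: "k \<in> ?N" using \<open>c = Inr k\<close> \<open>k \<in> ?N\<close> by simp
          have pref2: "Pa k (Some j) (Some j')" "\<not> Pa k (Some j') (Some j)"
            using h4 R \<open>c = Inr k\<close> \<open>a = Inr j\<close> by (auto simp: opref_simps strict_def)
          have acck': "strict (Pa k) (Some j') None" using irr[OF kN R(2) pkj] by blast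
          have wa: "weak_order_on (insert None (Some ` ?M)) (Pa k)" by (rule gi_wa[OF gi kN])
          have wo: "weak_order_on (insert None (Some ` ?N)) (Po j)" by (rule gi_wo[OF gi \<open>j\<in>?M\<close>])
          have acc1: "strict (Pa k) (Some j) None"
            using acck' pref2 wo_trans[OF wa, of "Some j" "Some j'" None] wo_trans[OF wa, of None "Some j" "Some j'"]
              \<open>j\<in>?M\<close> R(2) unfolding strict_def by auto
          have acc2: "strict (Po j) (Some k) None"
            using accj pref wo_trans[OF wo, of "Some k" "Some i" None] wo_trans[OF wo, of None "Some k" "Some i"]
              kN \<open>i\<in>?N\<close> unfolding strict_def by auto
          have u1: "\<not> Pa k (Some ob') (Some j)" if "ob'\<in>?M" "P k ob' = 1" for ob'
            using rowu[OF kN R(2) that(1) pkj] that pref2 by auto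
          have u2: "\<not> Po j (Some i') (Some k)" if "i'\<in>?N" "P i' j = 1" for i'
            using colu[OF \<open>i\<in>?N\<close> that(1) \<open>j\<in>?M\<close> pij] that pref by auto
          show False using nb'[of k j] kN \<open>j\<in>?M\<close> acc1 acc2 u1 u2 unfolding acceptable_def by blast
        qed
      qed
    qed
  qed
  show ?thesis unfolding weakly_stable'_def using dm noblk by blast
qed



lemma ws_from_assoc:
  assumes gi: "general_instance n m Pa Po" and ws: "weakly_stable' n m Pa Po Q"
  shows "gen_weakly_stable n m Pa Po (\<lambda>i ob. Q (Inl i) (Inl ob))"
proof -
  let ?N = "{1..n::nat}" and ?M = "{1..m::nat}" and ?A = "agents' n m" and ?O = "objects' n m"
  let ?P = "\<lambda>i ob. Q (Inl i) (Inl ob)"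
  have fA: "finite ?A" unfolding agents'_def by simp
  have fO: "finite ?O" unfolding objects'_def by simp
  have nn: "\<And>a c. a\<in>?A \<Longrightarrow> c\<in>?O \<Longrightarrow> Q a c \<ge> 0"
    and z1: "\<And>a c. a\<in>?A \<Longrightarrow> c\<in>?O \<Longrightarrow> Q a c = 0 \<or> Q a c = 1"
    and rs: "\<And>a. a\<in>?A \<Longrightarrow> (\<Sum>c\<in>?O. Q a c) = 1"
    and cs: "\<And>c. c\<in>?O \<Longrightarrow> (\<Sum>a\<in>?A. Q a c) = 1"
    using ws unfolding weakly_stable'_def det_matching'_def bistochastic'_def by auto
  have noblk: "\<And>a b c c'. a\<in>?A \<Longrightarrow> b\<in>?A \<Longrightarrow> c\<in>?O \<Longrightarrow> c'\<in>?O \<Longrightarrow> Q a c' = 1 \<Longrightarrow> Q b c = 1 \<Longrightarrow>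
     strict (assoc_apref Pa Po a) c c' \<Longrightarrow> strict (assoc_opref Pa Po c) a b \<Longrightarrow> False"
    using ws unfolding weakly_stable'_def by blast
  have rowex: "\<exists>c\<in>?O. Q a c = 1" if "a\<in>?A" for a
    using sum01_exists[OF fO, of "Q a"] z1 rs that by auto
  have colex: "\<exists>a\<in>?A. Q a c = 1" if "c\<in>?O" for c
    using sum01_exists[OF fA, of "\<lambda>a. Q a c"] z1 cs that by auto
  have rowu: "Q a c' = 0" if "a\<in>?A" "c\<in>?O" "c'\<in>?O" "Q a c = 1" "c' \<noteq> c" for a c c'
    using sum01_unique[OF fO, of "Q a" c c'] nn rs that by auto
  have colu: "Q b c = 0" if "a\<in>?A" "b\<in>?A" "c\<in>?O" "Q a c = 1" "b \<noteq> a" for a b c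
    using sum01_unique[OF fA, of "\<lambda>a. Q a c" a b] nn cs that by auto
  have inA: "Inl i \<in> ?A" if "i \<in> ?N" for i using that unfolding agents'_def by auto
  have inA2: "Inr j \<in> ?A" if "j \<in> ?M" for j using that unfolding agents'_def by auto
  have inO: "Inl ob \<in> ?O" if "ob \<in> ?M" for ob using that unfolding objects'_def by auto
  have inO2: "Inr i \<in> ?O" if "i \<in> ?N" for i using that unfolding objects'_def by auto
  have det: "gen_det_matching n m ?P"
    unfolding gen_det_matching_def gen_random_matching_def
  proof (intro conjI ballI)
    fix i ob assume "i \<in> ?N" "ob \<in> ?M"
    then show "?P i ob \<ge> 0" "?P i ob = 0 \<or> ?P i ob = 1" using nn z1 inA inO by auto
  next
    fix i assume i: "i \<in> ?N"
    have "(\<Sum>k\<in>?N. Q (Inl i) (Inr k)) \<ge> 0" using nn inA inO2 i by (intro sum_nonneg) auto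
    then show "(\<Sum>ob\<in>?M. ?P i ob) \<le> 1" using rs[OF inA[OF i]] by (simp add: sum_objects')
  next
    fix ob assume ob: "ob \<in> ?M"
    have "(\<Sum>j\<in>?M. Q (Inr j) (Inl ob)) \<ge> 0" using nn inA2 inO ob by (intro sum_nonneg) auto
    then show "(\<Sum>i\<in>?N. ?P i ob) \<le> 1" using cs[OF inO[OF ob]] by (simp add: sum_agents')
  qed
  have ir: "indiv_rational n m Pa Po ?P"
    unfolding indiv_rational_def
  proof (intro ballI impI)
    fix i ob assume i: "i \<in> ?N" and ob: "ob \<in> ?M"
      and h: "strict (Pa i) None (Some ob) \<or> strict (Po ob) None (Some i)"
    show "?P i ob = 0"
    proof (rule ccontr)
      assume "?P i ob \<noteq> 0"
      then have q1: "Q (Inl i) (Inl ob) = 1" using z1 inA[OF i] inO[OF ob] by auto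
      from h show False
      proof
        assume hn: "strict (Pa i) None (Some ob)"
        obtain b where b: "b \<in> ?A" "Q b (Inr i) = 1" using colex[OF inO2[OF i]] by auto
        have bne: "b \<noteq> Inl i"
          using rowu[OF inA[OF i] inO[OF ob] inO2[OF i] q1] b by auto
        have s1: "strict (assoc_apref Pa Po (Inl i)) (Inr i) (Inl ob)"
          using hn by (simp add: apref_simps strict_def)
        have s2: "strict (assoc_opref Pa Po (Inr i)) (Inl i) b"
          using b(1)
        proof (cases rule: agents'_cases)
          case (L i') then show ?thesis using bne by (auto simp: opref_simps strict_def first_rank_def)
        next
          case (R j) then show ?thesis by (simp add: opref_simps strict_def)
        qed
        show False using noblk[OF inA[OF i] b(1) inO2[OF i] inO[OF ob] q1 b(2) s1 s2] .
      next
        assume hn: "strict (Po ob) None (Some i)"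
        obtain c' where c': "c' \<in> ?O" "Q (Inr ob) c' = 1" using rowex[OF inA2[OF ob]] by auto
        have cne: "c' \<noteq> Inl ob"
          using colu[OF inA[OF i] inA2[OF ob] inO[OF ob] q1] c' by auto
        have s1: "strict (assoc_apref Pa Po (Inr ob)) (Inl ob) c'"
          using c'(1)
        proof (cases rule: objects'_cases)
          case (L ob') then show ?thesis using cne by (auto simp: apref_simps strict_def first_rank_def)
        next
          case (R k) then show ?thesis by (simp add: apref_simps strict_def)
        qed
        have s2: "strict (assoc_opref Pa Po (Inl ob)) (Inr ob) (Inl i)"
          using hn by (simp add: opref_simps strict_def)
        show False using noblk[OF inA2[OF ob] inA[OF i] inO[OF ob] c'(1) c'(2) q1 s1 s2] .
      qed
    qed
  qed
  have nb: "\<not> (\<exists>i\<in>?N. \<exists>ob\<in>?M. acceptable Pa Po i ob \<and>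
          (\<Sum>ob'\<in>{ob'\<in>?M. Pa i (Some ob') (Some ob)}. ?P i ob') = 0 \<and>
          (\<Sum>j\<in>{j\<in>?N. Po ob (Some j) (Some i)}. ?P j ob) = 0)"
  proof
    assume "\<exists>i\<in>?N. \<exists>ob\<in>?M. acceptable Pa Po i ob \<and>
          (\<Sum>ob'\<in>{ob'\<in>?M. Pa i (Some ob') (Some ob)}. ?P i ob') = 0 \<and>
          (\<Sum>j\<in>{j\<in>?N. Po ob (Some j) (Some i)}. ?P j ob) = 0"
    then obtain i ob where i: "i\<in>?N" and ob: "ob\<in>?M" and acc: "acceptable Pa Po i ob"
      and s1: "(\<Sum>ob'\<in>{ob'\<in>?M. Pa i (Some ob') (Some ob)}. ?P i ob') = 0"
      and s2: "(\<Sum>j\<in>{j\<in>?N. Po ob (Some j) (Some i)}. ?P j ob) = 0" by blast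
    have accA: "strict (Pa i) (Some ob) None" and accO: "strict (Po ob) (Some i) None"
      using acc unfolding acceptable_def by auto
    have z1': "Q (Inl i) (Inl ob') = 0" if "ob'\<in>?M" "Pa i (Some ob') (Some ob)" for ob'
      using sum_nonneg_zeroD[OF _ _ s1, of ob'] that nn inA[OF i] inO by auto
    have z2': "Q (Inl j) (Inl ob) = 0" if "j\<in>?N" "Po ob (Some j) (Some i)" for j
      using sum_nonneg_zeroD[OF _ _ s2, of j] that nn inA inO[OF ob] by auto
    have wa: "weak_order_on (insert None (Some ` ?M)) (Pa i)" by (rule gi_wa[OF gi i])
    have wo: "weak_order_on (insert None (Some ` ?N)) (Po ob)" by (rule gi_wo[OF gi ob])
    obtain c' where c': "c' \<in> ?O" "Q (Inl i) c' = 1" using rowex[OF inA[OF i]] by auto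
    obtain b where b: "b \<in> ?A" "Q b (Inl ob) = 1" using colex[OF inO[OF ob]] by auto
    have t1: "strict (assoc_apref Pa Po (Inl i)) (Inl ob) c'"
      using c'(1)
    proof (cases rule: objects'_cases)
      case (L ob'')
      then have np: "\<not> Pa i (Some ob'') (Some ob)" using z1'[of ob''] c'(2) by auto
      have "Pa i (Some ob) (Some ob'')" using wo_total[OF wa, of "Some ob" "Some ob''"] np ob L(2) by auto
      then show ?thesis using L np accA by (auto simp: apref_simps strict_def)
    next
      case (R k) then show ?thesis using accA by (simp add: apref_simps strict_def)
    qed
    have t2: "strict (assoc_opref Pa Po (Inl ob)) (Inl i) b"
      using b(1)
    proof (cases rule: agents'_cases)
      case (L j)
      then have np: "\<not> Po ob (Some j) (Some i)" using z2'[of j] b(2) by auto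
      have "Po ob (Some i) (Some j)" using wo_total[OF wo, of "Some i" "Some j"] np i L(2) by auto
      then show ?thesis using L np accO by (auto simp: opref_simps strict_def)
    next
      case (R d) then show ?thesis using accO by (simp add: opref_simps strict_def)
    qed
    show False using noblk[OF inA[OF i] b(1) inO[OF ob] c'(1) c'(2) b(2) t1 t2] .
  qed
  show ?thesis unfolding gen_weakly_stable_def using det ir nb by blast
qed



theorem proposition26:
  fixes n m :: nat
    and Pa Po :: "nat \<Rightarrow> nat option \<Rightarrow> nat option \<Rightarrow> bool"
    and p :: "nat \<Rightarrow> nat \<Rightarrow> real"
  assumes "general_instance n m Pa Po"
    and "gen_random_matching n m p"
  shows "gen_ex_post_weakly_stable n m Pa Po p \<longleftrightarrow>
           ex_post_weakly_stable' n m Pa Po (assoc_matching n m p) \<and> non_wasteful n m Pa Po p"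
proof
  assume h: "gen_ex_post_weakly_stable n m Pa Po p"
  then have nw: "non_wasteful n m Pa Po p" unfolding gen_ex_post_weakly_stable_def by blast
  from h obtain K :: nat and lam Ps where
    k1: "\<forall>k<K. 0 < lam k \<and> lam k \<le> 1 \<and> gen_weakly_stable n m Pa Po (Ps k)"
    and k2: "(\<Sum>k<K. lam k) = 1"
    and k3: "\<forall>i\<in>{1..n}. \<forall>ob\<in>{1..m}. p i ob = (\<Sum>k<K. lam k * Ps k i ob)"
    unfolding gen_ex_post_weakly_stable_def by blast
  have "ex_post_weakly_stable' n m Pa Po (assoc_matching n m p)"
    unfolding ex_post_weakly_stable'_def
  proof (intro conjI exI)
    show "bistochastic' n m (assoc_matching n m p)" by (rule assoc_bist[OF assms(2)])
    show "\<forall>k<K. 0 < lam k \<and> weakly_stable' n m Pa Po (assoc_matching n m (Ps k))"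
      using k1 assoc_ws[OF assms(1)] by blast
    show "(\<Sum>k<K. lam k) = 1" by (rule k2)
    show "\<forall>a\<in>agents' n m. \<forall>c\<in>objects' n m.
       assoc_matching n m p a c = (\<Sum>k<K. lam k * assoc_matching n m (Ps k) a c)"
      using assoc_lin[OF k2 k3] by blast
  qed
  then show "ex_post_weakly_stable' n m Pa Po (assoc_matching n m p) \<and> non_wasteful n m Pa Po p"
    using nw by blast
next
  assume h: "ex_post_weakly_stable' n m Pa Po (assoc_matching n m p) \<and> non_wasteful n m Pa Po p"
  then obtain K :: nat and lam Qs where
    k1: "\<forall>k<K. 0 < lam k \<and> weakly_stable' n m Pa Po (Qs k)"
    and k2: "(\<Sum>k<K. lam k) = 1"
    and k3: "\<forall>a\<in>agents' n m. \<forall>c\<in>objects' n m. assoc_matching n m p a c = (\<Sum>k<K. lam k * Qs k a c)"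
    unfolding ex_post_weakly_stable'_def by blast
  have le1: "lam k \<le> 1" if "k < K" for k
  proof -
    have "lam k \<le> (\<Sum>k<K. lam k)"
      by (rule member_le_sum) (use that k1 in \<open>auto intro: less_imp_le\<close>)
    then show ?thesis using k2 by simp
  qed
  show "gen_ex_post_weakly_stable n m Pa Po p"
    unfolding gen_ex_post_weakly_stable_def
  proof (intro conjI exI)
    show "non_wasteful n m Pa Po p" using h by blast
    show "\<forall>k<K. 0 < lam k \<and> lam k \<le> 1 \<and>
        gen_weakly_stable n m Pa Po (\<lambda>i ob. Qs k (Inl i) (Inl ob))"
      using k1 le1 ws_from_assoc[OF assms(1)] by blast
    show "(\<Sum>k<K. lam k) = 1" by (rule k2)
    show "\<forall>i\<in>{1..n}. \<forall>ob\<in>{1..m}. p i ob = (\<Sum>k<K. lam k * Qs k (Inl i) (Inl ob))"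
    proof (intro ballI)
      fix i ob assume "i \<in> {1..n}" "ob \<in> {1..m}"
      then have "Inl i \<in> agents' n m" "Inl ob \<in> objects' n m"
        unfolding agents'_def objects'_def by auto
      then have "assoc_matching n m p (Inl i) (Inl ob) = (\<Sum>k<K. lam k * Qs k (Inl i) (Inl ob))"
        using k3 by blast
      then show "p i ob = (\<Sum>k<K. lam k * Qs k (Inl i) (Inl ob))"
        by (simp add: assoc_simps)
    qed
  qed
qed


end
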